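(* Let $\mathcal H_S$ and $\mathcal H_A$ be finite-dimensional Hilbert spaces, let $\rho_{SA}$ be a density matrix on $\mathcal H_S\otimes\mathcal H_A$, and let $\{|r_k\rangle\}$ be an orthonormal basis of $\mathcal H_S$. Suppose that for every orthonormal basis $\{|a\rangle\}$ of $\mathcal H_A$ and every outcome $a$ with $p_a>0$, the conditional state $\rho_{S|a}$ is diagonal in the basis $\{|r_k\rangle\}$. Then $$\rho_{SA}=\sum_k|r_k\rangle\langle r_k|\otimes C^A_k$$ for some positive semidefinite operators $C^A_k$ on $\mathcal H_A$.
   Context: For an orthonormal basis $\{|a\rangle\}$ of $\mathcal H_A$ with projectors $\Pi^A_a=|a\rangle\langle a|$: $p_a=\mathrm{Tr}[(I^S\otimes\Pi^A_a)\rho_{SA}]$ and, when $p_a>0$, $\rho_{S|a}=\mathrm{Tr}_A[(I^S\otimes\Pi^A_a)\rho_{SA}(I^S\otimes\Pi^A_a)]/p_a$. *)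

theory Defs
  imports "Jordan_Normal_Form.Matrix"
begin

text \<open>Finite-dimensional Hilbert spaces are modelled as C^d; operators as complex
  matrices (Jordan_Normal_Form). The tensor product C^dS (x) C^dA is C^(dS*dA) with
  the index of e_i (x) e_a equal to i*dA + a.\<close>

definition mtrace :: "complex mat \<Rightarrow> complex" where
  "mtrace M = (\<Sum>i<dim_row M. M $$ (i, i))"

definition adjoint :: "complex mat \<Rightarrow> complex mat" where
  "adjoint M = mat (dim_col M) (dim_row M) (\<lambda>(i, j). cnj (M $$ (j, i)))"

definition hermitian :: "complex mat \<Rightarrow> bool" where
  "hermitian M \<longleftrightarrow> dim_row M = dim_col M \<and> adjoint M = M"

definition psd :: "complex mat \<Rightarrow> bool" where
  "psd M \<longleftrightarrow> hermitian M \<and>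
     (\<forall>v \<in> carrier_vec (dim_row M). Re ((M *\<^sub>v v) \<bullet>c v) \<ge> 0)"

definition density_matrix :: "nat \<Rightarrow> complex mat \<Rightarrow> bool" where
  "density_matrix n \<rho> \<longleftrightarrow> \<rho> \<in> carrier_mat n n \<and> psd \<rho> \<and> mtrace \<rho> = 1"

text \<open>The columns of a unitary matrix form an orthonormal basis, and every orthonormal
  basis (ordered) arises this way.\<close>
definition unitary :: "nat \<Rightarrow> complex mat \<Rightarrow> bool" where
  "unitary n U \<longleftrightarrow> U \<in> carrier_mat n n \<and> adjoint U * U = 1\<^sub>m n"

definition ketbra :: "complex vec \<Rightarrow> complex mat" where
  "ketbra v = mat (dim_vec v) (dim_vec v) (\<lambda>(i, j). v $ i * cnj (v $ j))"

definition kron :: "complex mat \<Rightarrow> complex mat \<Rightarrow> complex mat" where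
  "kron A B = mat (dim_row A * dim_row B) (dim_col A * dim_col B)
     (\<lambda>(i, j). A $$ (i div dim_row B, j div dim_col B) * B $$ (i mod dim_row B, j mod dim_col B))"

definition ptrace_A :: "nat \<Rightarrow> nat \<Rightarrow> complex mat \<Rightarrow> complex mat" where
  "ptrace_A dS dA M = mat dS dS (\<lambda>(i, j). \<Sum>a<dA. M $$ (i * dA + a, j * dA + a))"

definition outcome_prob :: "nat \<Rightarrow> complex mat \<Rightarrow> complex vec \<Rightarrow> real" where
  "outcome_prob dS \<rho> v = Re (mtrace (kron (1\<^sub>m dS) (ketbra v) * \<rho>))"

definition cond_state :: "nat \<Rightarrow> nat \<Rightarrow> complex mat \<Rightarrow> complex vec \<Rightarrow> complex mat" where
  "cond_state dS dA \<rho> v =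
     (1 / complex_of_real (outcome_prob dS \<rho> v)) \<cdot>\<^sub>m
       ptrace_A dS dA (kron (1\<^sub>m dS) (ketbra v) * \<rho> * kron (1\<^sub>m dS) (ketbra v))"

definition diagonal_in :: "nat \<Rightarrow> complex mat \<Rightarrow> complex mat \<Rightarrow> bool" where
  "diagonal_in n R \<sigma> \<longleftrightarrow> (\<forall>k<n. \<forall>l<n. k \<noteq> l \<longrightarrow> (adjoint R * \<sigma> * R) $$ (k, l) = 0)"

end

theory Submission
  imports Defs "Jordan_Normal_Form.Determinant"
begin

definition sform :: "nat \<Rightarrow> complex mat \<Rightarrow> (nat \<Rightarrow> complex) \<Rightarrow> (nat \<Rightarrow> complex) \<Rightarrow> complex" where
  "sform n M x y = (\<Sum>z<n. \<Sum>w<n. cnj (x z) * M $$ (z, w) * y w)"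

lemma sform_cong:
  assumes "\<And>z. z < n \<Longrightarrow> x z = x' z" "\<And>z. z < n \<Longrightarrow> y z = y' z"
  shows "sform n M x y = sform n M x' y'"
  unfolding sform_def using assms by (auto intro!: sum.cong)

lemma sform_sum:
  assumes "finite I" "finite J"
  shows "sform n M (\<lambda>z. \<Sum>i\<in>I. a i * x i z) (\<lambda>w. \<Sum>j\<in>J. b j * y j w)
       = (\<Sum>i\<in>I. \<Sum>j\<in>J. cnj (a i) * b j * sform n M (x i) (y j))"
proof -
  have "sform n M (\<lambda>z. \<Sum>i\<in>I. a i * x i z) (\<lambda>w. \<Sum>j\<in>J. b j * y j w)
     = (\<Sum>z<n. \<Sum>w<n. \<Sum>i\<in>I. \<Sum>j\<in>J. cnj (a i) * b j * (cnj (x i z) * M $$ (z, w) * y j w))"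
    unfolding sform_def
    by (simp add: cnj_sum sum_distrib_left sum_distrib_right mult_ac)
  also have "\<dots> = (\<Sum>i\<in>I. \<Sum>j\<in>J. \<Sum>z<n. \<Sum>w<n. cnj (a i) * b j * (cnj (x i z) * M $$ (z, w) * y j w))"
    by (subst sum.swap, subst (2) sum.swap, subst (3) sum.swap, subst (2) sum.swap) (rule refl)
  also have "\<dots> = (\<Sum>i\<in>I. \<Sum>j\<in>J. cnj (a i) * b j * sform n M (x i) (y j))"
    unfolding sform_def by (simp add: sum_distrib_left)
  finally show ?thesis .
qed

lemma sform_lin2:
  "sform n M (\<lambda>z. a * x z + b * y z) (\<lambda>w. c * x' w + d * y' w)
   = cnj a * c * sform n M x x' + cnj a * d * sform n M x y' + cnj b * c * sform n M y x' + cnj b * d * sform n M y y'"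
  unfolding sform_def
  by (simp add: sum.distrib sum_distrib_left algebra_simps)

lemma herm_entry:
  assumes "hermitian M" "M \<in> carrier_mat n n" "z < n" "w < n"
  shows "M $$ (w, z) = cnj (M $$ (z, w))"
proof -
  have "adjoint M $$ (w, z) = M $$ (w, z)" using assms(1) unfolding hermitian_def by simp
  thus ?thesis using assms(2-4) unfolding adjoint_def by auto
qed

lemma sform_herm:
  assumes "hermitian M" "M \<in> carrier_mat n n"
  shows "cnj (sform n M x y) = sform n M y x"
proof -
  have "cnj (sform n M x y) = (\<Sum>z<n. \<Sum>w<n. cnj (y w) * M $$ (w, z) * x z)"
    unfolding sform_def cnj_sum
  proof (intro sum.cong refl)
    fix z w assume "z \<in> {..<n}" "w \<in> {..<n}"
    then have h: "M $$ (w, z) = cnj (M $$ (z, w))" by (intro herm_entry[OF assms]) auto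
    show "cnj (cnj (x z) * M $$ (z, w) * y w) = cnj (y w) * M $$ (w, z) * x z"
      by (simp add: h)
  qed
  also have "\<dots> = sform n M y x" unfolding sform_def by (rule sum.swap)
  finally show ?thesis .
qed

lemma sform_psd:
  assumes "psd M" "M \<in> carrier_mat n n"
  shows "Re (sform n M x x) \<ge> 0"
proof -
  let ?v = "vec n x"
  have "?v \<in> carrier_vec (dim_row M)" using assms(2) by auto
  hence "Re ((M *\<^sub>v ?v) \<bullet>c ?v) \<ge> 0" using assms(1) unfolding psd_def by blast
  moreover have "(M *\<^sub>v ?v) \<bullet>c ?v = sform n M x x"
    using assms(2) unfolding sform_def scalar_prod_def
    by (auto simp: scalar_prod_def sum_distrib_right sum_distrib_left mult_ac atLeast0LessThan intro!: sum.cong)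
  ultimately show ?thesis by simp
qed

lemma sform_zero:
  assumes "psd M" "M \<in> carrier_mat n n" "Re (sform n M x x) = 0" "Re (sform n M y y) = 0"
  shows "sform n M x y = 0"
proof -
  let ?q = "sform n M x y"
  let ?t = "- cnj ?q"
  have h: "hermitian M" using assms(1) unfolding psd_def by simp
  have "sform n M (\<lambda>z. 1 * x z + ?t * y z) (\<lambda>z. 1 * x z + ?t * y z)
     = sform n M x x + ?t * ?q + cnj ?t * sform n M y x + cnj ?t * ?t * sform n M y y"
    using sform_lin2[of n M 1 x ?t y 1 x ?t y] by simp
  also have "sform n M y x = cnj ?q" using sform_herm[OF h assms(2)] by simp
  finally have e: "sform n M (\<lambda>z. 1 * x z + ?t * y z) (\<lambda>z. 1 * x z + ?t * y z)
     = sform n M x x - 2 * (cnj ?q * ?q) + ?q * cnj ?q * sform n M y y" by simp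
  have qq: "?q * cnj ?q = of_real ((cmod ?q)^2)" by (rule complex_norm_square[symmetric])
  have "Re (cnj ?q * ?q) = (cmod ?q)^2" by (subst mult.commute, subst qq) simp
  moreover have "Re (?q * cnj ?q * sform n M y y) = (cmod ?q)^2 * Re (sform n M y y)"
    by (subst qq) simp
  moreover have "Re (sform n M (\<lambda>z. 1 * x z + ?t * y z) (\<lambda>z. 1 * x z + ?t * y z)) \<ge> 0"
    by (rule sform_psd[OF assms(1,2)])
  ultimately have "(cmod ?q)^2 \<le> 0" using e assms(3,4) by simp
  thus ?thesis by simp
qed

lemma mult_entry:
  assumes "A \<in> carrier_mat m k" "B \<in> carrier_mat k l" "i < m" "j < l"
  shows "(A * B) $$ (i, j) = (\<Sum>z<k. A $$ (i, z) * B $$ (z, j))"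
  using assms by (auto simp: scalar_prod_def atLeast0LessThan intro!: sum.cong)

definition wv :: "nat \<Rightarrow> complex vec \<Rightarrow> nat \<Rightarrow> nat \<Rightarrow> complex" where
  "wv dA v i = (\<lambda>z. if z div dA = i then v $ (z mod dA) else 0)"

lemma divmod_bounds:
  assumes "x < dS * (dA::nat)"
  shows "x div dA < dS" "x mod dA < dA"
proof -
  have "dA > 0" using assms by (cases dA) auto
  then show "x mod dA < dA" by simp
  show "x div dA < dS" using assms less_mult_imp_div_less[of x dS dA] by (simp add: mult.commute)
qed

lemma K_carrier:
  assumes "v \<in> carrier_vec dA"
  shows "kron (1\<^sub>m dS) (ketbra v) \<in> carrier_mat (dS * dA) (dS * dA)"
  using assms unfolding kron_def ketbra_def by auto

lemma K_entry:
  assumes "v \<in> carrier_vec dA" "x < dS * dA" "y < dS * dA"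
  shows "kron (1\<^sub>m dS) (ketbra v) $$ (x, y) =
     (if x div dA = y div dA then v $ (x mod dA) * cnj (v $ (y mod dA)) else 0)"
  using assms divmod_bounds[OF assms(2)] divmod_bounds[OF assms(3)]
  unfolding kron_def ketbra_def by auto

lemma K_entry1:
  assumes "v \<in> carrier_vec dA" "x < dS * dA" "y < dS * dA"
  shows "kron (1\<^sub>m dS) (ketbra v) $$ (x, y) = v $ (x mod dA) * cnj (wv dA v (x div dA) y)"
  using K_entry[OF assms] unfolding wv_def by auto

lemma K_entry2:
  assumes "v \<in> carrier_vec dA" "x < dS * dA" "y < dS * dA"
  shows "kron (1\<^sub>m dS) (ketbra v) $$ (x, y) = wv dA v (y div dA) x * cnj (v $ (y mod dA))"
  using K_entry[OF assms] unfolding wv_def by auto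

lemma KrK_entry:
  assumes v: "v \<in> carrier_vec dA" and r: "\<rho> \<in> carrier_mat (dS * dA) (dS * dA)"
    and xy: "x < dS * dA" "y < dS * dA"
  shows "(kron (1\<^sub>m dS) (ketbra v) * \<rho> * kron (1\<^sub>m dS) (ketbra v)) $$ (x, y)
     = v $ (x mod dA) * cnj (v $ (y mod dA)) * sform (dS * dA) \<rho> (wv dA v (x div dA)) (wv dA v (y div dA))"
proof -
  let ?n = "dS * dA"
  let ?K = "kron (1\<^sub>m dS) (ketbra v)"
  have K: "?K \<in> carrier_mat ?n ?n" by (rule K_carrier[OF v])
  have "(?K * \<rho> * ?K) $$ (x, y) = (\<Sum>w<?n. (?K * \<rho>) $$ (x, w) * ?K $$ (w, y))"
    by (rule mult_entry[OF mult_carrier_mat[OF K r] K xy])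
  also have "\<dots> = (\<Sum>w<?n. (\<Sum>z<?n. ?K $$ (x, z) * \<rho> $$ (z, w)) * ?K $$ (w, y))"
    by (intro sum.cong refl, subst mult_entry[OF K r xy(1)]) auto
  also have "\<dots> = (\<Sum>w<?n. \<Sum>z<?n. v $ (x mod dA) * cnj (v $ (y mod dA)) *
        (cnj (wv dA v (x div dA) z) * \<rho> $$ (z, w) * wv dA v (y div dA) w))"
    by (intro sum.cong refl) (auto simp: sum_distrib_right sum_distrib_left K_entry1[OF v xy(1)] K_entry2[OF v _ xy(2)] mult_ac)
  also have "\<dots> = (\<Sum>z<?n. \<Sum>w<?n. v $ (x mod dA) * cnj (v $ (y mod dA)) *
        (cnj (wv dA v (x div dA) z) * \<rho> $$ (z, w) * wv dA v (y div dA) w))"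
    by (rule sum.swap)
  also have "\<dots> = v $ (x mod dA) * cnj (v $ (y mod dA)) * sform ?n \<rho> (wv dA v (x div dA)) (wv dA v (y div dA))"
    unfolding sform_def by (simp add: sum_distrib_left)
  finally show ?thesis .
qed

lemma ptrace_entry:
  assumes v: "v \<in> carrier_vec dA" and r: "\<rho> \<in> carrier_mat (dS * dA) (dS * dA)"
    and ij: "i < dS" "j < dS"
  shows "ptrace_A dS dA (kron (1\<^sub>m dS) (ketbra v) * \<rho> * kron (1\<^sub>m dS) (ketbra v)) $$ (i, j)
     = (\<Sum>a<dA. v $ a * cnj (v $ a)) * sform (dS * dA) \<rho> (wv dA v i) (wv dA v j)"
proof -
  have lt: "a < dA \<Longrightarrow> k < dS \<Longrightarrow> k * dA + a < dS * dA" for a k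
  proof -
    assume "a < dA" "k < dS"
    then have "k * dA + a < (k + 1) * dA" by simp
    also have "\<dots> \<le> dS * dA" using \<open>k < dS\<close> by (intro mult_le_mono1) simp
    finally show ?thesis .
  qed
  show ?thesis
    unfolding ptrace_A_def using ij
    by (auto simp: KrK_entry[OF v r] lt sum_distrib_right intro!: sum.cong)
qed

lemma trace_entry:
  assumes v: "v \<in> carrier_vec dA" and r: "\<rho> \<in> carrier_mat (dS * dA) (dS * dA)"
  shows "mtrace (kron (1\<^sub>m dS) (ketbra v) * \<rho>) = (\<Sum>i<dS. sform (dS * dA) \<rho> (wv dA v i) (wv dA v i))"
proof -
  let ?n = "dS * dA"
  let ?K = "kron (1\<^sub>m dS) (ketbra v)"
  have K: "?K \<in> carrier_mat ?n ?n" by (rule K_carrier[OF v])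
  have "mtrace (?K * \<rho>) = (\<Sum>x<?n. \<Sum>z<?n. ?K $$ (x, z) * \<rho> $$ (z, x))"
  proof -
    have d: "dim_row (?K * \<rho>) = ?n" using K by simp
    show ?thesis unfolding mtrace_def d
      by (intro sum.cong refl, subst mult_entry[OF K r]) auto
  qed
  also have "\<dots> = (\<Sum>x<?n. \<Sum>z<?n. \<Sum>i<dS. cnj (wv dA v i z) * \<rho> $$ (z, x) * wv dA v i x)"
  proof (intro sum.cong refl)
    fix x z assume xz: "x \<in> {..<?n}" "z \<in> {..<?n}"
    have "(\<Sum>i<dS. cnj (wv dA v i z) * \<rho> $$ (z, x) * wv dA v i x)
       = (\<Sum>i<dS. if x div dA = i then cnj (wv dA v (x div dA) z) * \<rho> $$ (z, x) * v $ (x mod dA) else 0)"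
      by (intro sum.cong refl) (auto simp: wv_def)
    also have "\<dots> = cnj (wv dA v (x div dA) z) * \<rho> $$ (z, x) * v $ (x mod dA)"
      using divmod_bounds[of x dS dA] xz by (simp add: sum.delta)
    finally show "?K $$ (x, z) * \<rho> $$ (z, x) = (\<Sum>i<dS. cnj (wv dA v i z) * \<rho> $$ (z, x) * wv dA v i x)"
      using K_entry1[OF v, where x=x and y=z and dS=dS] xz by (simp add: mult_ac)
  qed
  also have "\<dots> = (\<Sum>i<dS. \<Sum>z<?n. \<Sum>x<?n. cnj (wv dA v i z) * \<rho> $$ (z, x) * wv dA v i x)"
    by (subst sum.swap, subst (2) sum.swap, subst sum.swap) (rule refl)
  also have "\<dots> = (\<Sum>i<dS. sform ?n \<rho> (wv dA v i) (wv dA v i))"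
    unfolding sform_def ..
  finally show ?thesis .
qed

definition Tk :: "nat \<Rightarrow> complex mat \<Rightarrow> nat \<Rightarrow> (nat \<Rightarrow> complex) \<Rightarrow> nat \<Rightarrow> complex" where
  "Tk dA R k f = (\<lambda>z. R $$ (z div dA, k) * f (z mod dA))"

lemma unitary_col_unit:
  assumes "unitary n U" "a < n"
  shows "(\<Sum>c<n. col U a $ c * cnj (col U a $ c)) = 1"
proof -
  have U: "U \<in> carrier_mat n n" and e: "adjoint U * U = 1\<^sub>m n" using assms unfolding unitary_def by auto
  have aU: "adjoint U \<in> carrier_mat n n" using U unfolding adjoint_def by auto
  have "(adjoint U * U) $$ (a, a) = 1" using e assms by simp
  then have "(\<Sum>z<n. adjoint U $$ (a, z) * U $$ (z, a)) = 1" using mult_entry[OF aU U assms(2) assms(2)] by simp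
  moreover have "(\<Sum>z<n. adjoint U $$ (a, z) * U $$ (z, a)) = (\<Sum>c<n. col U a $ c * cnj (col U a $ c))"
    using U assms(2) by (auto simp: adjoint_def intro!: sum.cong)
  ultimately show ?thesis by simp
qed

lemma Tk_expand:
  assumes "z < dS * dA"
  shows "Tk dA R k (\<lambda>c. v $ c) z = (\<Sum>i<dS. R $$ (i, k) * wv dA v i z)"
proof -
  have "(\<Sum>i<dS. R $$ (i, k) * wv dA v i z) = (\<Sum>i<dS. if z div dA = i then R $$ (z div dA, k) * v $ (z mod dA) else 0)"
    by (intro sum.cong refl) (auto simp: wv_def)
  also have "\<dots> = R $$ (z div dA, k) * v $ (z mod dA)"
    using divmod_bounds[OF assms] by (simp add: sum.delta)
  finally show ?thesis unfolding Tk_def by simp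
qed

lemma key_offdiag:
  fixes dS dA :: nat and \<rho> R :: "complex mat"
  assumes rc: "\<rho> \<in> carrier_mat (dS * dA) (dS * dA)" and rpsd: "psd \<rho>"
    and R: "unitary dS R"
    and cond: "\<And>U a. unitary dA U \<Longrightarrow> a < dA \<Longrightarrow> outcome_prob dS \<rho> (col U a) > 0 \<Longrightarrow>
                 diagonal_in dS R (cond_state dS dA \<rho> (col U a))"
    and U: "unitary dA U" and a: "a < dA" and kl: "k < dS" "l < dS" "k \<noteq> l"
  shows "sform (dS * dA) \<rho> (Tk dA R k (\<lambda>c. col U a $ c)) (Tk dA R l (\<lambda>c. col U a $ c)) = 0"
proof -
  let ?n = "dS * dA"
  define v where "v = col U a"
  have Uc: "U \<in> carrier_mat dA dA" using U unfolding unitary_def by auto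
  have Rc: "R \<in> carrier_mat dS dS" using R unfolding unitary_def by auto
  have v: "v \<in> carrier_vec dA" using Uc unfolding v_def by auto
  have unit: "(\<Sum>c<dA. v $ c * cnj (v $ c)) = 1" using unitary_col_unit[OF U a] unfolding v_def .
  let ?S = "\<lambda>i j. sform ?n \<rho> (wv dA v i) (wv dA v j)"
  have exp: "sform ?n \<rho> (Tk dA R k (\<lambda>c. v $ c)) (Tk dA R l (\<lambda>c. v $ c))
      = (\<Sum>i<dS. \<Sum>j<dS. cnj (R $$ (i, k)) * R $$ (j, l) * ?S i j)"
  proof -
    have "sform ?n \<rho> (Tk dA R k (\<lambda>c. v $ c)) (Tk dA R l (\<lambda>c. v $ c))
       = sform ?n \<rho> (\<lambda>z. \<Sum>i<dS. R $$ (i, k) * wv dA v i z) (\<lambda>z. \<Sum>j<dS. R $$ (j, l) * wv dA v j z)"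
      by (intro sform_cong Tk_expand)
    also have "\<dots> = (\<Sum>i<dS. \<Sum>j<dS. cnj (R $$ (i, k)) * R $$ (j, l) * ?S i j)"
      by (rule sform_sum) auto
    finally show ?thesis .
  qed
  define p where "p = outcome_prob dS \<rho> v"
  have p: "p = (\<Sum>i<dS. Re (?S i i))"
    unfolding p_def outcome_prob_def trace_entry[OF v rc] by (simp add: Re_sum)
  have nonneg: "\<And>i. Re (?S i i) \<ge> 0" by (rule sform_psd[OF rpsd rc])
  show ?thesis
  proof (cases "p > 0")
    case True
    have "diagonal_in dS R (cond_state dS dA \<rho> v)" using cond[OF U a] True unfolding v_def p_def by simp
    then have z: "(adjoint R * cond_state dS dA \<rho> v * R) $$ (k, l) = 0"
      using kl unfolding diagonal_in_def by blast
    let ?s = "cond_state dS dA \<rho> v"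
    have sc: "?s \<in> carrier_mat dS dS" unfolding cond_state_def ptrace_A_def by auto
    have sent: "\<And>i j. i < dS \<Longrightarrow> j < dS \<Longrightarrow> ?s $$ (i, j) = (1 / of_real p) * ?S i j"
      unfolding cond_state_def p_def using ptrace_entry[OF v rc] unit
      by (auto simp: ptrace_A_def)
    have aR: "adjoint R \<in> carrier_mat dS dS" using Rc unfolding adjoint_def by auto
    have "(adjoint R * ?s * R) $$ (k, l) = (\<Sum>j<dS. (adjoint R * ?s) $$ (k, j) * R $$ (j, l))"
      by (rule mult_entry[OF mult_carrier_mat[OF aR sc] Rc kl(1) kl(2)])
    also have "\<dots> = (\<Sum>j<dS. (\<Sum>i<dS. adjoint R $$ (k, i) * ?s $$ (i, j)) * R $$ (j, l))"
      by (intro sum.cong refl, subst mult_entry[OF aR sc kl(1)]) auto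
    also have "\<dots> = (1 / of_real p) * (\<Sum>j<dS. \<Sum>i<dS. cnj (R $$ (i, k)) * R $$ (j, l) * ?S i j)"
      using Rc kl by (auto simp: sum_distrib_left sum_distrib_right sent adjoint_def mult_ac intro!: sum.cong)
    finally have "(1 / of_real p) * (\<Sum>j<dS. \<Sum>i<dS. cnj (R $$ (i, k)) * R $$ (j, l) * ?S i j) = 0"
      using z by simp
    then have "(\<Sum>j<dS. \<Sum>i<dS. cnj (R $$ (i, k)) * R $$ (j, l) * ?S i j) = 0" using True by simp
    then show ?thesis unfolding exp v_def[symmetric] by (subst sum.swap) simp
  next
    case False
    have "(\<Sum>i<dS. Re (?S i i)) \<ge> 0" by (rule sum_nonneg) (rule nonneg)
    then have "(\<Sum>i<dS. Re (?S i i)) = 0" using False p by linarith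
    then have z: "\<And>i. i < dS \<Longrightarrow> Re (?S i i) = 0" using nonneg by (simp add: sum_nonneg_eq_0_iff)
    have "\<And>i j. i < dS \<Longrightarrow> j < dS \<Longrightarrow> ?S i j = 0"
      by (rule sform_zero[OF rpsd rc]) (auto simp: z)
    then show ?thesis unfolding exp v_def[symmetric] by simp
  qed
qed

definition emb :: "nat \<Rightarrow> nat \<Rightarrow> nat \<Rightarrow> complex \<Rightarrow> complex \<Rightarrow> complex \<Rightarrow> complex \<Rightarrow> complex mat" where
  "emb n c d \<alpha> \<beta> \<gamma> \<delta> = mat n n (\<lambda>(x, y). if x = c \<and> y = c then \<alpha> else if x = c \<and> y = d then \<beta>
      else if x = d \<and> y = c then \<gamma> else if x = d \<and> y = d then \<delta> else if x = y then 1 else 0)"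

lemma sum2:
  fixes g :: "nat \<Rightarrow> 'a::comm_monoid_add"
  assumes "c < n" "d < n" "c \<noteq> d" "\<And>z. z < n \<Longrightarrow> z \<noteq> c \<Longrightarrow> z \<noteq> d \<Longrightarrow> g z = 0"
  shows "(\<Sum>z<n. g z) = g c + g d"
proof -
  have "(\<Sum>z<n. g z) = (\<Sum>z\<in>{c, d}. g z)"
    using assms by (intro sum.mono_neutral_right) auto
  thus ?thesis using assms(3) by simp
qed

lemma emb_unitary:
  assumes cd: "c < n" "d < n" "c \<noteq> d"
    and u1: "cnj \<alpha> * \<alpha> + cnj \<gamma> * \<gamma> = 1" and u2: "cnj \<beta> * \<beta> + cnj \<delta> * \<delta> = 1"
    and u3: "cnj \<alpha> * \<beta> + cnj \<gamma> * \<delta> = 0"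
  shows "unitary n (emb n c d \<alpha> \<beta> \<gamma> \<delta>)"
proof -
  let ?U = "emb n c d \<alpha> \<beta> \<gamma> \<delta>"
  have Uc: "?U \<in> carrier_mat n n" unfolding emb_def by auto
  have aU: "adjoint ?U \<in> carrier_mat n n" using Uc unfolding adjoint_def by auto
  have u3': "cnj \<beta> * \<alpha> + cnj \<delta> * \<gamma> = 0" using arg_cong[OF u3, of cnj] by (simp add: mult.commute)
  have "adjoint ?U * ?U = 1\<^sub>m n"
  proof (rule eq_matI)
    fix x y assume xy: "x < dim_row (1\<^sub>m n)" "y < dim_col (1\<^sub>m n)"
    then have xy: "x < n" "y < n" by auto
    have e: "(adjoint ?U * ?U) $$ (x, y) = (\<Sum>z<n. cnj (?U $$ (z, x)) * ?U $$ (z, y))"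
      using mult_entry[OF aU Uc xy] Uc xy by (auto simp: adjoint_def intro!: sum.cong)
    show "(adjoint ?U * ?U) $$ (x, y) = 1\<^sub>m n $$ (x, y)"
    proof (cases "x \<in> {c, d}")
      case False
      have "(\<Sum>z<n. cnj (?U $$ (z, x)) * ?U $$ (z, y)) = (\<Sum>z<n. if z = x then ?U $$ (x, y) else 0)"
        using False xy by (intro sum.cong refl) (auto simp: emb_def)
      also have "\<dots> = ?U $$ (x, y)" using xy by (simp add: sum.delta)
      finally show ?thesis using e False xy by (auto simp: emb_def)
    next
      case xin: True
      show ?thesis
      proof (cases "y \<in> {c, d}")
        case False
        have "(\<Sum>z<n. cnj (?U $$ (z, x)) * ?U $$ (z, y)) = (\<Sum>z<n. if z = y then cnj (?U $$ (y, x)) else 0)"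
          using False xy by (intro sum.cong refl) (auto simp: emb_def)
        also have "\<dots> = 0" using xy xin False by (auto simp: emb_def)
        finally show ?thesis using e False xin xy by auto
      next
        case yin: True
        have "(\<Sum>z<n. cnj (?U $$ (z, x)) * ?U $$ (z, y)) =
              cnj (?U $$ (c, x)) * ?U $$ (c, y) + cnj (?U $$ (d, x)) * ?U $$ (d, y)"
          by (rule sum2[OF cd]) (use xin yin cd in \<open>auto simp: emb_def\<close>)
        then show ?thesis using e xin yin cd u1 u2 u3 u3' by (auto simp: emb_def)
      qed
    qed
  qed (use aU Uc in auto)
  then show ?thesis using Uc unfolding unitary_def by simp
qed

lemma emb_col:
  assumes "c < n" "d < n" "c \<noteq> d" "z < n"
  shows "col (emb n c d \<alpha> \<beta> \<gamma> \<delta>) c $ z = (if z = c then \<alpha> else if z = d then \<gamma> else 0)"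
  using assms unfolding emb_def by auto

lemma one_unitary: "unitary n (1\<^sub>m n)"
proof -
  have "adjoint (1\<^sub>m n) = (1\<^sub>m n :: complex mat)"
    by (rule eq_matI) (auto simp: adjoint_def)
  then show ?thesis unfolding unitary_def by simp
qed

definition delta :: "nat \<Rightarrow> nat \<Rightarrow> complex" where
  "delta c = (\<lambda>z. if z = c then 1 else 0)"

definition Mx :: "nat \<Rightarrow> complex mat \<Rightarrow> nat \<Rightarrow> complex mat \<Rightarrow> nat \<Rightarrow> nat \<Rightarrow> nat \<Rightarrow> nat \<Rightarrow> complex" where
  "Mx n \<rho> dA R k l c d = sform n \<rho> (Tk dA R k (delta c)) (Tk dA R l (delta d))"

lemma Tk_expand2:
  assumes "z < dS * dA"
  shows "Tk dA R k f z = (\<Sum>c<dA. f c * Tk dA R k (delta c) z)"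
proof -
  have "(\<Sum>c<dA. f c * Tk dA R k (delta c) z) = (\<Sum>c<dA. if c = z mod dA then R $$ (z div dA, k) * f (z mod dA) else 0)"
    by (intro sum.cong refl) (auto simp: Tk_def delta_def)
  also have "\<dots> = R $$ (z div dA, k) * f (z mod dA)"
    using divmod_bounds[OF assms] by (simp add: sum.delta')
  finally show ?thesis unfolding Tk_def by simp
qed

lemma sform_Tk_expand:
  "sform (dS * dA) \<rho> (Tk dA R k f) (Tk dA R l g) = (\<Sum>c<dA. \<Sum>d<dA. cnj (f c) * g d * Mx (dS * dA) \<rho> dA R k l c d)"
proof -
  have "sform (dS * dA) \<rho> (Tk dA R k f) (Tk dA R l g) =
    sform (dS * dA) \<rho> (\<lambda>z. \<Sum>c<dA. f c * Tk dA R k (delta c) z) (\<lambda>z. \<Sum>d<dA. g d * Tk dA R l (delta d) z)"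
    by (intro sform_cong Tk_expand2)
  also have "\<dots> = (\<Sum>c<dA. \<Sum>d<dA. cnj (f c) * g d * Mx (dS * dA) \<rho> dA R k l c d)"
    unfolding Mx_def by (rule sform_sum) auto
  finally show ?thesis .
qed

lemma test_emb:
  fixes dS dA :: nat and \<rho> R :: "complex mat"
  assumes rc: "\<rho> \<in> carrier_mat (dS * dA) (dS * dA)" and rpsd: "psd \<rho>"
    and R: "unitary dS R"
    and cond: "\<And>U a. unitary dA U \<Longrightarrow> a < dA \<Longrightarrow> outcome_prob dS \<rho> (col U a) > 0 \<Longrightarrow>
                 diagonal_in dS R (cond_state dS dA \<rho> (col U a))"
    and kl: "k < dS" "l < dS" "k \<noteq> l"
    and cd: "c < dA" "d < dA" "c \<noteq> d"
    and u1: "cnj \<alpha> * \<alpha> + cnj \<gamma> * \<gamma> = 1" and u2: "cnj \<beta> * \<beta> + cnj \<delta> * \<delta> = 1"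
    and u3: "cnj \<alpha> * \<beta> + cnj \<gamma> * \<delta> = 0"
  shows "cnj \<alpha> * \<alpha> * Mx (dS * dA) \<rho> dA R k l c c + cnj \<alpha> * \<gamma> * Mx (dS * dA) \<rho> dA R k l c d
       + cnj \<gamma> * \<alpha> * Mx (dS * dA) \<rho> dA R k l d c + cnj \<gamma> * \<gamma> * Mx (dS * dA) \<rho> dA R k l d d = 0"
proof -
  let ?U = "emb dA c d \<alpha> \<beta> \<gamma> \<delta>"
  have U: "unitary dA ?U" by (rule emb_unitary[OF cd u1 u2 u3])
  have z: "sform (dS * dA) \<rho> (Tk dA R k (\<lambda>x. col ?U c $ x)) (Tk dA R l (\<lambda>x. col ?U c $ x)) = 0"
    by (rule key_offdiag[OF rc rpsd R cond U cd(1) kl])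
  have pt: "\<And>m z. z < dS * dA \<Longrightarrow> Tk dA R m (\<lambda>x. col ?U c $ x) z = \<alpha> * Tk dA R m (delta c) z + \<gamma> * Tk dA R m (delta d) z"
  proof -
    fix m z assume "z < dS * dA"
    then have "z mod dA < dA" by (rule divmod_bounds)
    then show "Tk dA R m (\<lambda>x. col ?U c $ x) z = \<alpha> * Tk dA R m (delta c) z + \<gamma> * Tk dA R m (delta d) z"
      using emb_col[OF cd, of "z mod dA" \<alpha> \<beta> \<gamma> \<delta>] cd by (auto simp: Tk_def delta_def)
  qed
  have "sform (dS * dA) \<rho> (Tk dA R k (\<lambda>x. col ?U c $ x)) (Tk dA R l (\<lambda>x. col ?U c $ x)) =
     sform (dS * dA) \<rho> (\<lambda>z. \<alpha> * Tk dA R k (delta c) z + \<gamma> * Tk dA R k (delta d) z)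
                        (\<lambda>z. \<alpha> * Tk dA R l (delta c) z + \<gamma> * Tk dA R l (delta d) z)"
    by (intro sform_cong pt)
  then show ?thesis using z unfolding sform_lin2 Mx_def by simp
qed

lemma offdiag_zero:
  fixes dS dA :: nat and \<rho> R :: "complex mat"
  assumes rc: "\<rho> \<in> carrier_mat (dS * dA) (dS * dA)" and rpsd: "psd \<rho>"
    and R: "unitary dS R"
    and cond: "\<And>U a. unitary dA U \<Longrightarrow> a < dA \<Longrightarrow> outcome_prob dS \<rho> (col U a) > 0 \<Longrightarrow>
                 diagonal_in dS R (cond_state dS dA \<rho> (col U a))"
    and kl: "k < dS" "l < dS" "k \<noteq> l"
    and cd: "c < dA" "d < dA"
  shows "Mx (dS * dA) \<rho> dA R k l c d = 0"
proof -
  let ?M = "Mx (dS * dA) \<rho> dA R k l"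
  have diag: "?M e e = 0" if e: "e < dA" for e
  proof -
    have z: "sform (dS * dA) \<rho> (Tk dA R k (\<lambda>x. col (1\<^sub>m dA) e $ x)) (Tk dA R l (\<lambda>x. col (1\<^sub>m dA) e $ x)) = 0"
      by (rule key_offdiag[OF rc rpsd R cond one_unitary e kl])
    have pt: "\<And>m z. z < dS * dA \<Longrightarrow> Tk dA R m (\<lambda>x. col (1\<^sub>m dA) e $ x) z = Tk dA R m (delta e) z"
    proof -
      fix m z assume "z < dS * dA"
      then have "z mod dA < dA" by (rule divmod_bounds)
      then show "Tk dA R m (\<lambda>x. col (1\<^sub>m dA) e $ x) z = Tk dA R m (delta e) z"
        using e by (auto simp: Tk_def delta_def)
    qed
    have "sform (dS * dA) \<rho> (Tk dA R k (\<lambda>x. col (1\<^sub>m dA) e $ x)) (Tk dA R l (\<lambda>x. col (1\<^sub>m dA) e $ x))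
       = ?M e e" unfolding Mx_def by (intro sform_cong pt)
    then show ?thesis using z by simp
  qed
  show ?thesis
  proof (cases "c = d")
    case True then show ?thesis using diag cd by simp
  next
    case False
    have e1: "cnj (3/5) * (3/5) * ?M c c + cnj (3/5) * (4/5) * ?M c d
       + cnj (4/5) * (3/5) * ?M d c + cnj (4/5) * (4/5) * ?M d d = 0"
      by (rule test_emb[OF rc rpsd R cond kl cd False, where \<beta> = "-4/5" and \<delta> = "3/5"])
        (simp_all add: complex_eq_iff)
    have e2: "cnj (3/5) * (3/5) * ?M c c + cnj (3/5) * (4 * \<i> / 5) * ?M c d
       + cnj (4 * \<i> / 5) * (3/5) * ?M d c + cnj (4 * \<i> / 5) * (4 * \<i> / 5) * ?M d d = 0"
      by (rule test_emb[OF rc rpsd R cond kl cd False, where \<beta> = "4 * \<i> / 5" and \<delta> = "3/5"])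
        (simp_all add: complex_eq_iff)
    have "(12/25) * (?M c d + ?M d c) = 0" using e1 diag cd by (simp add: algebra_simps)
    then have a: "?M c d + ?M d c = 0" by (simp only: mult_eq_0_iff) simp
    have "(12 * \<i> / 25) * (?M c d - ?M d c) = 0" using e2 diag cd by (simp add: algebra_simps)
    then have b: "?M c d - ?M d c = 0" by (simp only: mult_eq_0_iff) simp
    from a b show ?thesis by (simp add: algebra_simps) 
  qed
qed

lemma sform_deltas:
  assumes "x < n" "y < n"
  shows "sform n M (\<lambda>z. if z = x then 1 else 0) (\<lambda>w. if w = y then 1 else 0) = M $$ (x, y)"
proof -
  have "sform n M (\<lambda>z. if z = x then 1 else 0) (\<lambda>w. if w = y then 1 else 0)
      = (\<Sum>z<n. if z = x then M $$ (z, y) else 0)"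
    unfolding sform_def using assms(2) by (intro sum.cong refl) (simp add: sum.delta' if_distrib cong: if_cong)
  also have "\<dots> = M $$ (x, y)" using assms(1) by (simp add: sum.delta')
  finally show ?thesis .
qed

lemma eq_idx:
  assumes "z < dS * dA" "x < dS * (dA::nat)"
  shows "(z div dA = x div dA \<and> z mod dA = x mod dA) \<longleftrightarrow> z = x"
  by (metis div_mult_mod_eq)

theorem lemma2:
  fixes dS dA :: nat and \<rho> R :: "complex mat"
  assumes rho: "density_matrix (dS * dA) \<rho>"
    and R: "unitary dS R"
    and cond: "\<And>U a. unitary dA U \<Longrightarrow> a < dA \<Longrightarrow> outcome_prob dS \<rho> (col U a) > 0 \<Longrightarrow>
                 diagonal_in dS R (cond_state dS dA \<rho> (col U a))"
  shows "\<exists>C :: nat \<Rightarrow> complex mat.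
           (\<forall>k<dS. C k \<in> carrier_mat dA dA \<and> psd (C k)) \<and>
           \<rho> = mat (dS * dA) (dS * dA)
                 (\<lambda>ij. \<Sum>k<dS. kron (ketbra (col R k)) (C k) $$ ij)"
proof -
  let ?n = "dS * dA"
  have rc: "\<rho> \<in> carrier_mat ?n ?n" and rpsd: "psd \<rho>" using rho unfolding density_matrix_def by auto
  have rh: "hermitian \<rho>" using rpsd unfolding psd_def by simp
  have Rc: "R \<in> carrier_mat dS dS" and Ru: "adjoint R * R = 1\<^sub>m dS" using R unfolding unitary_def by auto
  have aR: "adjoint R \<in> carrier_mat dS dS" using Rc unfolding adjoint_def by auto
  have RR: "R * adjoint R = 1\<^sub>m dS" by (rule mat_mult_left_right_inverse[OF aR Rc Ru])
  have RRe: "(\<Sum>k<dS. R $$ (i, k) * cnj (R $$ (j, k))) = (if i = j then 1 else 0)" if "i < dS" "j < dS" for i j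
  proof -
    have "(R * adjoint R) $$ (i, j) = (\<Sum>k<dS. R $$ (i, k) * cnj (R $$ (j, k)))"
      using mult_entry[OF Rc aR that] that Rc by (auto simp: adjoint_def intro!: sum.cong)
    then show ?thesis using RR that by simp
  qed
  let ?M = "\<lambda>k l c d. Mx ?n \<rho> dA R k l c d"
  have off: "\<And>k l c d. k < dS \<Longrightarrow> l < dS \<Longrightarrow> k \<noteq> l \<Longrightarrow> c < dA \<Longrightarrow> d < dA \<Longrightarrow> ?M k l c d = 0"
    by (rule offdiag_zero[OF rc rpsd R cond]) auto
  define C where "C k = mat dA dA (\<lambda>(c, d). ?M k k c d)" for k
  have Cc: "C k \<in> carrier_mat dA dA" for k unfolding C_def by auto
  have Cpsd: "psd (C k)" for k
  proof -
    have "adjoint (C k) = C k"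
    proof (rule eq_matI)
      fix c d assume "c < dim_row (C k)" "d < dim_col (C k)"
      then have cd: "c < dA" "d < dA" by (auto simp: C_def)
      have "cnj (?M k k d c) = ?M k k c d" unfolding Mx_def by (rule sform_herm[OF rh rc])
      then show "adjoint (C k) $$ (c, d) = C k $$ (c, d)" using cd by (simp add: adjoint_def C_def)
    qed (auto simp: adjoint_def C_def)
    then have h: "hermitian (C k)" unfolding hermitian_def by (simp add: C_def)
    have "Re ((C k *\<^sub>v u) \<bullet>c u) \<ge> 0" if u: "u \<in> carrier_vec (dim_row (C k))" for u
    proof -
      have ud: "dim_vec u = dA" using u Cc by auto
      have "(C k *\<^sub>v u) \<bullet>c u = (\<Sum>c<dA. \<Sum>d<dA. cnj (u $ c) * u $ d * ?M k k c d)"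
        using ud Cc by (auto simp: scalar_prod_def atLeast0LessThan C_def sum_distrib_right sum_distrib_left mult_ac intro!: sum.cong)
      also have "\<dots> = sform ?n \<rho> (Tk dA R k (\<lambda>c. u $ c)) (Tk dA R k (\<lambda>c. u $ c))"
        by (rule sform_Tk_expand[symmetric])
      finally show ?thesis using sform_psd[OF rpsd rc] by simp
    qed
    then show ?thesis unfolding psd_def using h by blast
  qed
  have main: "\<rho> $$ (x, y) = (\<Sum>k<dS. kron (ketbra (col R k)) (C k) $$ (x, y))" if xy: "x < ?n" "y < ?n" for x y
  proof -
    note bx = divmod_bounds[OF xy(1)] and bY = divmod_bounds[OF xy(2)]
    have "(\<Sum>k<dS. kron (ketbra (col R k)) (C k) $$ (x, y))
        = (\<Sum>k<dS. R $$ (x div dA, k) * cnj (R $$ (y div dA, k)) * ?M k k (x mod dA) (y mod dA))"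
      using xy bx bY Rc Cc by (intro sum.cong refl) (auto simp: kron_def ketbra_def C_def)
    also have "\<dots> = (\<Sum>k<dS. \<Sum>l<dS. cnj (cnj (R $$ (x div dA, k))) * cnj (R $$ (y div dA, l)) * ?M k l (x mod dA) (y mod dA))"
    proof (intro sum.cong refl)
      fix k assume k: "k \<in> {..<dS}"
      have "(\<Sum>l<dS. cnj (cnj (R $$ (x div dA, k))) * cnj (R $$ (y div dA, l)) * ?M k l (x mod dA) (y mod dA))
         = (\<Sum>l<dS. if l = k then R $$ (x div dA, k) * cnj (R $$ (y div dA, k)) * ?M k k (x mod dA) (y mod dA) else 0)"
        using off k bx bY by (intro sum.cong refl) auto
      also have "\<dots> = R $$ (x div dA, k) * cnj (R $$ (y div dA, k)) * ?M k k (x mod dA) (y mod dA)"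
        using k by (simp add: sum.delta')
      finally show "R $$ (x div dA, k) * cnj (R $$ (y div dA, k)) * ?M k k (x mod dA) (y mod dA) =
          (\<Sum>l<dS. cnj (cnj (R $$ (x div dA, k))) * cnj (R $$ (y div dA, l)) * ?M k l (x mod dA) (y mod dA))" by simp
    qed
    also have "\<dots> = sform ?n \<rho> (\<lambda>z. \<Sum>k<dS. cnj (R $$ (x div dA, k)) * Tk dA R k (delta (x mod dA)) z)
                                (\<lambda>w. \<Sum>l<dS. cnj (R $$ (y div dA, l)) * Tk dA R l (delta (y mod dA)) w)"
      unfolding Mx_def by (rule sform_sum[symmetric]) auto
    also have "\<dots> = sform ?n \<rho> (\<lambda>z. if z = x then 1 else 0) (\<lambda>w. if w = y then 1 else 0)"
    proof (rule sform_cong)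
      fix z assume z: "z < ?n"
      note bz = divmod_bounds[OF z]
      have "(\<Sum>k<dS. cnj (R $$ (x div dA, k)) * Tk dA R k (delta (x mod dA)) z)
          = (\<Sum>k<dS. R $$ (z div dA, k) * cnj (R $$ (x div dA, k))) * delta (x mod dA) (z mod dA)"
        unfolding Tk_def by (simp add: sum_distrib_right sum_distrib_left mult_ac)
      also have "\<dots> = (if z = x then 1 else 0)"
        using RRe[OF bz(1) bx(1)] eq_idx[OF z xy(1)] by (auto simp: delta_def)
      finally show "(\<Sum>k<dS. cnj (R $$ (x div dA, k)) * Tk dA R k (delta (x mod dA)) z) = (if z = x then 1 else 0)" .
      have "(\<Sum>k<dS. cnj (R $$ (y div dA, k)) * Tk dA R k (delta (y mod dA)) z)
          = (\<Sum>k<dS. R $$ (z div dA, k) * cnj (R $$ (y div dA, k))) * delta (y mod dA) (z mod dA)"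
        unfolding Tk_def by (simp add: sum_distrib_right sum_distrib_left mult_ac)
      also have "\<dots> = (if z = y then 1 else 0)"
        using RRe[OF bz(1) bY(1)] eq_idx[OF z xy(2)] by (auto simp: delta_def)
      finally show "(\<Sum>k<dS. cnj (R $$ (y div dA, k)) * Tk dA R k (delta (y mod dA)) z) = (if z = y then 1 else 0)" .
    qed
    also have "\<dots> = \<rho> $$ (x, y)" by (rule sform_deltas[OF xy])
    finally show ?thesis by simp
  qed
  show ?thesis
  proof (intro exI[of _ C] conjI allI impI)
    fix k assume "k < dS"
    show "C k \<in> carrier_mat dA dA" by (rule Cc)
    show "psd (C k)" by (rule Cpsd)
  next
    show "\<rho> = mat ?n ?n (\<lambda>ij. \<Sum>k<dS. kron (ketbra (col R k)) (C k) $$ ij)"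
      by (rule eq_matI) (use rc main in auto)
  qed
qed

end
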